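(* Let $\lambda\neq0$. For every integer $k\ge0$ and every positive integer $N$, $$\frac12\sum_{n=0}^{k+N}E_n\lambda^n S_1(k+N,n)=(-1)^N\lambda\sum_{i=1}^{N+1}a_{i-1}(N;\lambda)\sum_{l=0}^{k}\binom{k}{l}(-1)^l(N+l-1)_l\sum_{n=0}^{k-l}2^{-i}E_n^{(i)}\lambda^nS_1(k-l,n).$$
   Context: $(x)_n=x(x-1)\cdots(x-n+1)$, $(x)_0=1$. The Euler numbers $E_n$ and higher-order Euler numbers $E_n^{(r)}$ are defined by $\frac{2}{e^t+1}=\sum_{n\ge0}E_n\frac{t^n}{n!}$ and $\left(\frac{2}{e^t+1}\right)^r=\sum_{n\ge0}E_n^{(r)}\frac{t^n}{n!}$. $S_1(n,k)$ are the (signed) Stirling numbers of the first kind, given by $\frac{(\log(1+t))^k}{k!}=\sum_{n\ge k}S_1(n,k)\frac{t^n}{n!}$. The numbers $a_i(N;\lambda)$ are defined recursively by $a_0(0;\lambda)=1/\lambda$ and, for $N\ge0$: $a_0(N+1;\lambda)=(N+\lambda)a_0(N;\lambda)$, $a_{N+1}(N+1;\lambda)=-(N+1)\lambda a_N(N;\lambda)$, $a_k(N+1;\lambda)=-k\lambda a_{k-1}(N;\lambda)+(N+(k+1)\lambda)a_k(N;\lambda)$ for $1\le k\le N$; they are the coefficients for which $\left(\frac{d}{dt}\right)^N F=\frac{(-1)^N\lambda}{(1+t)^N}\sum_{i=1}^{N+1}a_{i-1}(N;\lambda)F^i$ with $F=\frac{1}{(1+t)^\lambda+1}$. *)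

theory Defs
  imports "HOL-Computational_Algebra.Formal_Power_Series"
begin

definition falling :: "real \<Rightarrow> nat \<Rightarrow> real" where
  "falling x n = (\<Prod>i<n. x - of_nat i)"

definition euler_high :: "nat \<Rightarrow> nat \<Rightarrow> real" where
  "euler_high r n = fact n * fps_nth ((2 * inverse (fps_exp 1 + 1)) ^ r) n"

definition euler_num :: "nat \<Rightarrow> real" where
  "euler_num n = fact n * fps_nth (2 * inverse (fps_exp 1 + 1)) n"

text \<open>Signed Stirling numbers of the first kind: (log(1+t))^k/k! = sum S_1(n,k) t^n/n!.
  Note fps_ln 1 is the power series of log(1+t).\<close>
definition stirling1 :: "nat \<Rightarrow> nat \<Rightarrow> real" where
  "stirling1 n k = fact n * fps_nth ((fps_ln 1) ^ k / fps_const (fact k)) n"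

text \<open>The coefficients a_k(N;lambda); set to 0 for k > N (never used there).\<close>
fun acoef :: "real \<Rightarrow> nat \<Rightarrow> nat \<Rightarrow> real" where
  "acoef lam 0 k = (if k = 0 then 1 / lam else 0)"
| "acoef lam (Suc N) k =
     (if k = 0 then (of_nat N + lam) * acoef lam N 0
      else if k = Suc N then - (of_nat (Suc N)) * lam * acoef lam N N
      else if k \<le> N then - of_nat k * lam * acoef lam N (k - 1)
                         + (of_nat N + of_nat (k + 1) * lam) * acoef lam N k
      else 0)"

end

theory Submission
  imports Defs
begin
unbundle fps_syntax


lemma falling_neg: "(\<Prod>i=0..<l. - real N - of_nat i) = (-1)^l * falling (of_nat (N+l) - 1) l"
proof (induction l)
  case 0 then show ?case by (simp add: falling_def)
next
  case (Suc l)
  have f: "falling (of_nat (N + Suc l) - 1) (Suc l) = (of_nat (N+l)) * falling (of_nat (N+l) - 1) l"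
    unfolding falling_def by (subst prod.lessThan_Suc_shift) (simp add: algebra_simps)
  have "(\<Prod>i=0..<Suc l. - real N - of_nat i) = (\<Prod>i=0..<l. - real N - of_nat i) * (- real N - of_nat l)"
    by simp
  also have "\<dots> = (-1)^Suc l * (of_nat (N+l) * falling (of_nat (N+l) - 1) l)"
    using Suc by (simp add: algebra_simps)
  finally show ?case by (simp only: f)
qed

lemma binom_coef:
  assumes "l \<le> k"
  shows "fact k * ((- real N) gchoose l) = of_nat (k choose l) * (-1)^l * falling (of_nat (N+l) - 1) l * fact (k-l)"
proof -
  have e: "fact l * fact (k - l) * (k choose l) = fact k" by (rule binomial_fact_lemma[OF assms])
  have "(fact k :: real) = of_nat (fact l * fact (k - l) * (k choose l))"
    by (simp only: e of_nat_fact)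
  hence fk: "(fact k :: real) = fact l * fact (k - l) * of_nat (k choose l)"
    by (simp only: of_nat_mult of_nat_fact)
  have g: "(- real N) gchoose l = (\<Prod>i=0..<l. - real N - of_nat i) / fact l"
    by (simp add: gbinomial_prod_rev)
  show ?thesis unfolding fk g falling_neg by (simp add: field_simps)
qed

lemma deriv_iter_nth: fixes f :: "real fps" shows "fact k * ((fps_deriv ^^ n) f) $ k = fact (k+n) * f $ (k+n)"
proof (induction n arbitrary: k)
  case 0 then show ?case by simp
next
  case (Suc n)
  have "fact k * ((fps_deriv ^^ Suc n) f) $ k = fact k * of_nat (k+1) * ((fps_deriv ^^ n) f) $ (k+1)"
    by (simp add: algebra_simps)
  also have "\<dots> = fact (k+1) * ((fps_deriv ^^ n) f) $ (k+1)" by (simp add: algebra_simps)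
  also have "\<dots> = fact (k+Suc n) * f $ (k + Suc n)" using Suc[of "k+1"] by simp
  finally show ?case .
qed

lemma acoef_zero: "k > N \<Longrightarrow> acoef lam N k = 0"
proof (induction N arbitrary: k)
  case 0 then show ?case by simp
next
  case (Suc N) then show ?case by (simp del: acoef.simps add: acoef.simps(2))
qed

lemma acoef_rec: "acoef lam (Suc N) k = (if k = 0 then 0 else - of_nat k * lam * acoef lam N (k-1))
   + (of_nat N + of_nat (k+1) * lam) * acoef lam N k"
proof -
  consider "k = 0" | "k = Suc N" | "0 < k \<and> k \<le> N" | "k > Suc N" by linarith
  then show ?thesis
  proof cases
    case 1 then show ?thesis by (simp only: acoef.simps(2) if_True) simp
  next
    case 2
    then have "acoef lam N k = 0" by (simp add: acoef_zero)
    then show ?thesis using 2 by (simp only: acoef.simps(2)) simp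
  next
    case 3 then show ?thesis by (simp only: acoef.simps(2)) simp
  next
    case 4
    then have "acoef lam N k = 0" "acoef lam N (k-1) = 0" by (simp_all add: acoef_zero)
    then show ?thesis using 4 by (simp only: acoef.simps(2)) simp
  qed
qed


definition EE :: "real fps" where "EE = inverse (fps_exp 1 + 1)"
definition LL :: "real \<Rightarrow> real fps" where "LL lam = fps_const lam * fps_ln 1"
definition FF :: "real \<Rightarrow> real fps" where "FF lam = EE oo LL lam"

lemma LL0[simp]: "LL lam $ 0 = 0" by (simp add: LL_def)

lemma coef_compose:
  fixes A :: "real fps"
  shows "(\<Sum>n=0..m. fact n * A$n * lam^n * stirling1 m n) = fact m * (A oo LL lam) $ m"
proof -
  have s: "stirling1 m n * fact n = fact m * (fps_ln 1 ^ n) $ m" for n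
    by (simp add: stirling1_def divide_fps_const)
  have "(A oo LL lam) $ m = (\<Sum>n=0..m. A$n * (lam^n * (fps_ln 1 ^ n) $ m))"
    by (simp add: fps_compose_nth LL_def power_mult_distrib fps_const_power)
  moreover have pw: "fact n * A$n * lam^n * stirling1 m n = fact m * (A$n * (lam^n * (fps_ln 1 ^ n) $ m))" for n
  proof -
    have "fact n * A$n * lam^n * stirling1 m n = A$n * lam^n * (stirling1 m n * fact n)"
      by (simp only: mult_ac)
    also have "\<dots> = fact m * (A$n * (lam^n * (fps_ln 1 ^ n) $ m))" unfolding s by (simp only: mult_ac)
    finally show ?thesis .
  qed
  ultimately show ?thesis
    by (simp only: pw sum_distrib_left)
qed

lemma EE_deriv: "fps_deriv EE = EE^2 - EE"
proof -
  have ne: "(fps_exp 1 + 1 :: real fps) $ 0 \<noteq> 0" by simp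
  have inv: "(fps_exp 1 + 1) * EE = 1" unfolding EE_def using ne by (simp add: inverse_mult_eq_1')
  have "fps_deriv EE = - fps_exp 1 * EE^2"
    unfolding EE_def using fps_inverse_deriv[OF ne] by simp
  also have "fps_exp 1 * EE = 1 - EE" using inv by (simp add: algebra_simps)
  hence "- fps_exp 1 * EE^2 = - (1 - EE) * EE" by (simp add: power2_eq_square mult.assoc[symmetric])
  also have "\<dots> = EE^2 - EE" by (simp add: power2_eq_square algebra_simps)
  finally show ?thesis .
qed

lemma FF_deriv: "(1 + fps_X) * fps_deriv (FF lam) = fps_const lam * (FF lam ^ 2 - FF lam)"
proof -
  have dL: "fps_deriv (LL lam) = fps_const lam * inverse (1 + fps_X)"
    by (simp add: LL_def fps_ln_deriv)
  have i: "(1 + fps_X) * inverse (1 + fps_X :: real fps) = 1"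
    by (simp add: inverse_mult_eq_1')
  have "fps_deriv (FF lam) = (FF lam ^ 2 - FF lam) * (fps_const lam * inverse (1 + fps_X))"
    unfolding FF_def by (simp add: fps_compose_deriv EE_deriv fps_compose_sub_distrib fps_compose_power dL)
  then have "(1 + fps_X) * fps_deriv (FF lam) = fps_const lam * (FF lam ^ 2 - FF lam) * ((1 + fps_X) * inverse (1 + fps_X))"
    by (simp only: mult_ac)
  then show ?thesis using i by simp
qed



definition GG :: "real \<Rightarrow> nat \<Rightarrow> real fps" where
  "GG lam N = (\<Sum>k\<le>N. fps_const (acoef lam N k) * FF lam ^ (k+1))"

lemma dP: "(1 + fps_X) * fps_deriv ((1 + fps_X :: real fps) ^ N) = of_nat N * (1 + fps_X) ^ N"
proof (cases N)
  case 0 then show ?thesis by simp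
next
  case (Suc m)
  have "fps_deriv ((1 + fps_X :: real fps) ^ Suc m) = of_nat (Suc m) * (1 + fps_X) ^ m"
    by (simp only: fps_deriv_power' diff_Suc_1 fps_deriv_add fps_deriv_1 fps_deriv_fps_X add_0_left mult_1_right)
  then show ?thesis using Suc by (simp only: power_Suc mult_ac)
qed

lemma dPow: "(1 + fps_X) * fps_deriv (FF lam ^ (j+1)) = fps_const (lam * of_nat (j+1)) * (FF lam ^ (j+2) - FF lam ^ (j+1))"
proof -
  have "(1 + fps_X) * fps_deriv (FF lam ^ (j+1)) = of_nat (j+1) * FF lam ^ j * ((1 + fps_X) * fps_deriv (FF lam))"
    by (simp only: fps_deriv_power' add_diff_cancel_right' mult_ac)
  also have "\<dots> = of_nat (j+1) * fps_const lam * (FF lam ^ j * (FF lam ^ 2 - FF lam))"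
    unfolding FF_deriv by (simp only: mult_ac)
  also have "FF lam ^ j * (FF lam ^ 2 - FF lam) = FF lam ^ (j+2) - FF lam ^ (j+1)"
    by (simp add: algebra_simps power_add power2_eq_square)
  moreover have "fps_const (lam * of_nat (j+1)) = of_nat (j+1) * (fps_const lam :: real fps)"
    by (simp add: fps_of_nat[symmetric] mult.commute)
  ultimately show ?thesis by (simp only: mult.assoc)
qed

lemma GG_step: "GG lam (Suc N) = of_nat N * GG lam N - (1 + fps_X) * fps_deriv (GG lam N)"
proof -
  let ?F = "FF lam"
  let ?a = "acoef lam N"
  have D1: "(1 + fps_X) * fps_deriv (GG lam N) =
     (\<Sum>k\<le>N. fps_const (?a k * (lam * of_nat (k+1))) * ?F ^ (k+2))
   - (\<Sum>k\<le>N. fps_const (?a k * (lam * of_nat (k+1))) * ?F ^ (k+1))"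
  proof -
    have "(1 + fps_X) * fps_deriv (GG lam N) = (\<Sum>k\<le>N. fps_const (?a k) * ((1 + fps_X) * fps_deriv (?F ^ (k+1))))"
      unfolding GG_def by (simp add: fps_deriv_sum sum_distrib_left algebra_simps)
    also have "\<dots> = (\<Sum>k\<le>N. fps_const (?a k * (lam * of_nat (k+1))) * ?F ^ (k+2) - fps_const (?a k * (lam * of_nat (k+1))) * ?F ^ (k+1))"
      by (simp only: dPow right_diff_distrib mult.assoc fps_const_mult[symmetric])
    finally show ?thesis by (simp only: sum_subtractf)
  qed
  have D2: "of_nat N * GG lam N = (\<Sum>k\<le>N. fps_const (of_nat N * ?a k) * ?F ^ (k+1))"
    unfolding GG_def by (simp only: sum_distrib_left fps_const_mult[symmetric] fps_of_nat mult.assoc)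
  have L: "GG lam (Suc N) = (\<Sum>k\<le>Suc N. fps_const (if k = 0 then 0 else - of_nat k * lam * ?a (k-1)) * ?F^(k+1))
       + (\<Sum>k\<le>Suc N. fps_const ((of_nat N + of_nat (k+1) * lam) * ?a k) * ?F^(k+1))"
    unfolding GG_def acoef_rec by (simp add: fps_const_add[symmetric] distrib_right sum.distrib del: fps_const_add)
  have L1: "(\<Sum>k\<le>Suc N. fps_const (if k = 0 then 0 else - of_nat k * lam * ?a (k-1)) * ?F^(k+1))
     = - (\<Sum>k\<le>N. fps_const (?a k * (lam * of_nat (k+1))) * ?F ^ (k+2))"
  proof -
    have pw: "fps_const (if Suc k = 0 then 0 else - of_nat (Suc k) * lam * ?a (Suc k - 1)) * ?F^(Suc k+1)
       = - (fps_const (?a k * (lam * of_nat (k+1))) * ?F ^ (k+2))" for k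
    proof -
      have e1: "(if Suc k = 0 then 0 else - of_nat (Suc k) * lam * ?a (Suc k - 1)) = - (?a k * (lam * of_nat (k+1)))" by (simp add: algebra_simps)
      have e2: "Suc k + 1 = k + 2" by simp
      show ?thesis unfolding e1 e2 by (simp only: fps_const_neg[symmetric] mult_minus_left)
    qed
    show ?thesis
      by (subst sum.atMost_Suc_shift) (simp only: pw sum_negf, simp)
  qed
  have L2: "(\<Sum>k\<le>Suc N. fps_const ((of_nat N + of_nat (k+1) * lam) * ?a k) * ?F^(k+1))
     = (\<Sum>k\<le>N. fps_const (of_nat N * ?a k) * ?F ^ (k+1)) + (\<Sum>k\<le>N. fps_const (?a k * (lam * of_nat (k+1))) * ?F ^ (k+1))"
    by (simp add: acoef_zero sum.distrib[symmetric] fps_const_add[symmetric] distrib_right algebra_simps del: fps_const_add)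
  show ?thesis unfolding L L1 L2 D1 D2 by (simp add: algebra_simps)
qed

lemma ode:
  assumes "lam \<noteq> 0"
  shows "(1 + fps_X) ^ N * (fps_deriv ^^ N) (FF lam) = fps_const ((-1)^N * lam) * GG lam N"
proof (induction N)
  case 0
  have "fps_const lam * fps_const (1/lam) = (1 :: real fps)" using assms by (simp add: fps_const_mult[symmetric])
  then show ?case unfolding GG_def by (simp add: mult.assoc[symmetric])
next
  case (Suc N)
  let ?P = "1 + fps_X :: real fps"
  let ?H = "(fps_deriv ^^ N) (FF lam)"
  let ?c = "(-1)^N * lam"
  have d: "fps_deriv (?P ^ N) * ?H + ?P ^ N * fps_deriv ?H = fps_const ?c * fps_deriv (GG lam N)"
    using arg_cong[OF Suc.IH, of fps_deriv] by (simp add: add.commute)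
  have "?P * (fps_deriv (?P ^ N) * ?H + ?P ^ N * fps_deriv ?H) = (?P * fps_deriv (?P ^ N)) * ?H + ?P ^ Suc N * fps_deriv ?H"
    by (simp only: distrib_left mult.assoc power_Suc)
  also have "\<dots> = of_nat N * (?P ^ N * ?H) + ?P ^ Suc N * fps_deriv ?H"
    by (simp only: dP mult.assoc)
  finally have "?P * (fps_deriv (?P ^ N) * ?H + ?P ^ N * fps_deriv ?H) = of_nat N * (?P ^ N * ?H) + ?P ^ Suc N * fps_deriv ?H" .
  hence "of_nat N * (?P ^ N * ?H) + ?P ^ Suc N * fps_deriv ?H = ?P * (fps_const ?c * fps_deriv (GG lam N))"
    unfolding d by (rule sym)
  hence "of_nat N * (?P ^ N * ?H) + ?P ^ Suc N * fps_deriv ?H = fps_const ?c * (?P * fps_deriv (GG lam N))"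
    by (simp only: mult_ac)
  hence "?P ^ Suc N * fps_deriv ?H = fps_const ?c * (?P * fps_deriv (GG lam N)) - of_nat N * (fps_const ?c * GG lam N)"
    unfolding Suc.IH by (simp add: algebra_simps)
  also have "\<dots> = fps_const (- ?c) * (of_nat N * GG lam N - ?P * fps_deriv (GG lam N))"
    by (simp add: algebra_simps fps_const_neg[symmetric] del: fps_const_neg)
  finally show ?case by (simp add: GG_step)
qed



lemma euler_high_coef:
  "(\<Sum>n=0..m. (1 / 2 ^ i) * euler_high i n * lam ^ n * stirling1 m n) = fact m * (FF lam ^ i) $ m"
proof -
  have t: "(2 * inverse (fps_exp 1 + 1) :: real fps) ^ i = fps_const (2 ^ i) * EE ^ i"
    by (simp add: EE_def power_mult_distrib fps_numeral_fps_const fps_const_power)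
  have e: "(1 / 2 ^ i) * euler_high i n = fact n * (EE ^ i) $ n" for n
    unfolding euler_high_def t by simp
  have "(\<Sum>n=0..m. (1 / 2 ^ i) * euler_high i n * lam ^ n * stirling1 m n)
      = (\<Sum>n=0..m. fact n * (EE ^ i) $ n * lam ^ n * stirling1 m n)"
    by (simp only: e)
  also have "\<dots> = fact m * (EE ^ i oo LL lam) $ m" by (rule coef_compose)
  also have "EE ^ i oo LL lam = FF lam ^ i" unfolding FF_def by (simp add: fps_compose_power)
  finally show ?thesis .
qed

lemma euler_num_high: "euler_num n = euler_high 1 n"
  by (simp add: euler_num_def euler_high_def)

theorem theorem4:
  fixes lam :: real and k N :: nat
  assumes "lam \<noteq> 0" and "N \<ge> 1"
  shows "(1/2) * (\<Sum>n=0..k+N. euler_num n * lam ^ n * stirling1 (k+N) n)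
    = (-1) ^ N * lam * (\<Sum>i=1..N+1. acoef lam N (i-1) *
        (\<Sum>l=0..k. of_nat (k choose l) * (-1) ^ l * falling (of_nat (N+l) - 1) l *
          (\<Sum>n=0..k-l. (1 / 2 ^ i) * euler_high i n * lam ^ n * stirling1 (k-l) n)))"
proof -
  let ?F = "FF lam"
  let ?P = "1 + fps_X :: real fps"
  let ?B = "fps_binomial (- of_nat N) :: real fps"
  let ?c = "(-1)^N * lam"
  let ?T = "\<lambda>l. of_nat (k choose l) * (-1) ^ l * falling (of_nat (N+l) - 1) l"
  have h1: "(1/2) * (\<Sum>n=0..k+N. euler_num n * lam ^ n * stirling1 (k+N) n) = fact (k+N) * ?F $ (k+N)"
    using euler_high_coef[where i=1 and m="k+N" and lam=lam] by (simp add: euler_num_high sum_distrib_left mult_ac)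
  have h2: "fact (k+N) * ?F $ (k+N) = fact k * ((fps_deriv ^^ N) ?F) $ k"
    using deriv_iter_nth[of k N ?F] by simp
  have BP: "?B * ?P ^ N = 1"
    by (simp add: fps_binomial_of_nat[symmetric] fps_binomial_add_mult[symmetric])
  have h3: "(fps_deriv ^^ N) ?F = ?B * (fps_const ?c * GG lam N)"
  proof -
    have "(fps_deriv ^^ N) ?F = (?B * ?P ^ N) * (fps_deriv ^^ N) ?F" using BP by simp
    also have "\<dots> = ?B * (fps_const ?c * GG lam N)"
      by (simp only: mult.assoc ode[OF assms(1)])
    finally show ?thesis .
  qed
  have h4: "fact k * (?B * (fps_const ?c * GG lam N)) $ k
      = ?c * (\<Sum>j\<le>N. acoef lam N j * (\<Sum>l=0..k. (fact k * ?B $ l) * (?F ^ (j+1)) $ (k-l)))"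
  proof -
    have a: "(?B * (fps_const ?c * GG lam N)) $ k = (\<Sum>l=0..k. ?B $ l * (?c * (GG lam N) $ (k-l)))"
      by (simp only: fps_mult_nth[of ?B] fps_mult_left_const_nth)
    have b: "(GG lam N) $ m = (\<Sum>j\<le>N. acoef lam N j * (?F ^ (j+1)) $ m)" for m
      by (simp only: GG_def fps_sum_nth fps_mult_left_const_nth)
    have "fact k * (?B * (fps_const ?c * GG lam N)) $ k
       = (\<Sum>l=0..k. \<Sum>j\<le>N. ?c * (acoef lam N j * ((fact k * ?B $ l) * (?F ^ (j+1)) $ (k-l))))"
      unfolding a b by (simp add: sum_distrib_left mult_ac)
    also have "\<dots> = (\<Sum>j\<le>N. \<Sum>l=0..k. ?c * (acoef lam N j * ((fact k * ?B $ l) * (?F ^ (j+1)) $ (k-l))))"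
      by (rule sum.swap)
    also have "\<dots> = ?c * (\<Sum>j\<le>N. acoef lam N j * (\<Sum>l=0..k. (fact k * ?B $ l) * (?F ^ (j+1)) $ (k-l)))"
      by (simp add: sum_distrib_left)
    finally show ?thesis .
  qed
  have h5: "(\<Sum>l=0..k. (fact k * ?B $ l) * (?F ^ (j+1)) $ (k-l))
      = (\<Sum>l=0..k. ?T l * (fact (k-l) * (?F ^ (j+1)) $ (k-l)))" for j
  proof (rule sum.cong)
    fix l assume "l \<in> {0..k}"
    then have "fact k * ?B $ l = ?T l * fact (k-l)"
      using binom_coef[of l k N] by simp
    then show "(fact k * ?B $ l) * (?F ^ (j+1)) $ (k-l) = ?T l * (fact (k-l) * (?F ^ (j+1)) $ (k-l))"
      by (simp add: mult_ac)
  qed simp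
  have rhs: "(\<Sum>i=1..N+1. acoef lam N (i-1) *
        (\<Sum>l=0..k. ?T l * (\<Sum>n=0..k-l. (1 / 2 ^ i) * euler_high i n * lam ^ n * stirling1 (k-l) n)))
     = (\<Sum>j\<le>N. acoef lam N j * (\<Sum>l=0..k. ?T l * (fact (k-l) * (?F ^ (j+1)) $ (k-l))))"
  proof -
    have "(\<Sum>i=1..N+1. acoef lam N (i-1) *
        (\<Sum>l=0..k. ?T l * (\<Sum>n=0..k-l. (1 / 2 ^ i) * euler_high i n * lam ^ n * stirling1 (k-l) n)))
      = (\<Sum>i=1..N+1. acoef lam N (i-1) * (\<Sum>l=0..k. ?T l * (fact (k-l) * (?F ^ i) $ (k-l))))"
      by (simp only: euler_high_coef)
    also have "\<dots> = (\<Sum>j=0..N. acoef lam N j * (\<Sum>l=0..k. ?T l * (fact (k-l) * (?F ^ (j+1)) $ (k-l))))"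
    proof -
      have r: "(\<Sum>i\<in>{1..N+1}. h i) = (\<Sum>j\<in>{0..N}. h (j+1))" for h :: "nat \<Rightarrow> real"
        by (rule sum.reindex_bij_witness[of _ "\<lambda>j. j+1" "\<lambda>i. i-1"]) auto
      show ?thesis
        by (subst r) simp
    qed
    finally show ?thesis by (simp only: atLeast0AtMost)
  qed
  show ?thesis
    unfolding h1 h2 h3 h4 rhs using h5 by simp
qed


end
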